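(* Let $\mu\in\mathcal C$ be nilpotent, let $\mathfrak z$ be the centre of $(\mathfrak g,\mu)$, $\mathfrak z^\perp$ its orthogonal complement, $\mathrm{Pr}_{\mathfrak z},\mathrm{Pr}_{\mathfrak z^\perp}$ the orthogonal projections, $\mu_0:=\mathrm{Pr}_{\mathfrak z}\circ\mu$ and $\mu_1:=\mathrm{Pr}_{\mathfrak z^\perp}\circ\mu$. Let $D\in\mathfrak{gl}(\mathfrak g,J)$. Then $D\in\mathrm{Der}(\mu)$ if and only if $D(\mathfrak z)\subset\mathfrak z$ and the endomorphisms $D_{00}:=\mathrm{Pr}_{\mathfrak z}D\,\mathrm{Pr}_{\mathfrak z}$, $D_{01}:=\mathrm{Pr}_{\mathfrak z}D\,\mathrm{Pr}_{\mathfrak z^\perp}$, $D_{11}:=\mathrm{Pr}_{\mathfrak z^\perp}D\,\mathrm{Pr}_{\mathfrak z^\perp}$ of $\mathfrak g$ satisfy $$D_{00}\mu_0(v,w)+D_{01}\mu_1(v,w)-\mu_0(D_{11}v,w)-\mu_0(v,D_{11}w)=0\quad\text{for all }v,w\in\mathfrak g,$$ and $D_{11}\in\mathrm{Der}(\mu_1)$.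
   Context: $\mathfrak g$ is a real vector space of dimension $2n$ with complex structure $J$ and inner product $\langle\cdot,\cdot\rangle$ for which $J$ is orthogonal. A bracket is a skew-symmetric bilinear map $\mathfrak g\times\mathfrak g\to\mathfrak g$; $\mathcal C$ is the set of brackets satisfying the Jacobi identity and $\nu(J\cdot,\cdot)=J\nu(\cdot,\cdot)$. $\mathfrak{gl}(\mathfrak g,J)=\{A\in\mathrm{End}(\mathfrak g):AJ=JA\}$. For a bracket $\nu$, $\mathrm{Der}(\nu)=\{D\in\mathfrak{gl}(\mathfrak g,J): D\nu(\cdot,\cdot)=\nu(D\cdot,\cdot)+\nu(\cdot,D\cdot)\}$. *)

theory Defs
  imports "HOL-Analysis.Analysis"
begin

text \<open>The real vector space g with inner product is modelled by a finite-dimensional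
real inner product space (type class euclidean_space).\<close>

definition complex_structure :: "('a::euclidean_space \<Rightarrow> 'a) \<Rightarrow> bool" where
  "complex_structure J \<longleftrightarrow> linear J \<and> (\<forall>x. J (J x) = - x)"

definition orthogonal_map :: "('a::euclidean_space \<Rightarrow> 'a) \<Rightarrow> bool" where
  "orthogonal_map J \<longleftrightarrow> (\<forall>x y. inner (J x) (J y) = inner x y)"

definition is_bracket :: "('a::euclidean_space \<Rightarrow> 'a \<Rightarrow> 'a) \<Rightarrow> bool" where
  "is_bracket \<nu> \<longleftrightarrow> bilinear \<nu> \<and> (\<forall>x y. \<nu> x y = - \<nu> y x)"

definition jacobi :: "('a::euclidean_space \<Rightarrow> 'a \<Rightarrow> 'a) \<Rightarrow> bool" where
  "jacobi \<nu> \<longleftrightarrow> (\<forall>x y z. \<nu> x (\<nu> y z) + \<nu> y (\<nu> z x) + \<nu> z (\<nu> x y) = 0)"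

definition bracket_C :: "('a::euclidean_space \<Rightarrow> 'a) \<Rightarrow> ('a \<Rightarrow> 'a \<Rightarrow> 'a) set" where
  "bracket_C J = {\<nu>. is_bracket \<nu> \<and> jacobi \<nu> \<and> (\<forall>x y. \<nu> (J x) y = J (\<nu> x y))}"

definition gl_J :: "('a::euclidean_space \<Rightarrow> 'a) \<Rightarrow> ('a \<Rightarrow> 'a) set" where
  "gl_J J = {A. linear A \<and> (\<forall>x. A (J x) = J (A x))}"

definition Der :: "('a::euclidean_space \<Rightarrow> 'a) \<Rightarrow> ('a \<Rightarrow> 'a \<Rightarrow> 'a) \<Rightarrow> ('a \<Rightarrow> 'a) set" where
  "Der J \<nu> = {D \<in> gl_J J. \<forall>x y. D (\<nu> x y) = \<nu> (D x) y + \<nu> x (D y)}"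

fun lower_central :: "('a::euclidean_space \<Rightarrow> 'a \<Rightarrow> 'a) \<Rightarrow> nat \<Rightarrow> 'a set" where
  "lower_central \<nu> 0 = UNIV"
| "lower_central \<nu> (Suc k) = span {\<nu> x y | x y. y \<in> lower_central \<nu> k}"

definition nilpotent_bracket :: "('a::euclidean_space \<Rightarrow> 'a \<Rightarrow> 'a) \<Rightarrow> bool" where
  "nilpotent_bracket \<nu> \<longleftrightarrow> (\<exists>k. lower_central \<nu> k = {0})"

definition centre :: "('a::euclidean_space \<Rightarrow> 'a \<Rightarrow> 'a) \<Rightarrow> 'a set" where
  "centre \<nu> = {z. \<forall>x. \<nu> z x = 0}"

definition orth_proj :: "'a::euclidean_space set \<Rightarrow> 'a \<Rightarrow> 'a" where
  "orth_proj W v = (THE w. w \<in> W \<and> v - w \<in> orthogonal_comp W)"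

end

theory Submission
  imports Defs
begin

lemma orth_proj_eq:
  fixes W :: "'a::euclidean_space set"
  assumes W: "subspace W" and a: "a \<in> W" and va: "v - a \<in> orthogonal_comp W"
  shows "orth_proj W v = a"
  unfolding orth_proj_def
proof (rule the_equality)
  show "a \<in> W \<and> v - a \<in> orthogonal_comp W" using a va by blast
next
  fix b assume b: "b \<in> W \<and> v - b \<in> orthogonal_comp W"
  have 1: "a - b \<in> W" using W a b by (simp add: subspace_diff)
  have "(v - b) - (v - a) \<in> orthogonal_comp W"
    using subspace_diff[OF subspace_orthogonal_comp, of "v - b" W "v - a"] b va by blast
  moreover have "(v - b) - (v - a) = a - b" by simp
  ultimately have 2: "a - b \<in> orthogonal_comp W" by simp
  have "orthogonal (a - b) (a - b)" using 1 2 unfolding orthogonal_comp_def by blast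
  hence "a - b = 0" by (simp add: orthogonal_def)
  thus "b = a" by simp
qed

lemma centre_subspace:
  assumes "is_bracket \<mu>" shows "subspace (centre \<mu>)"
proof -
  have b: "bilinear \<mu>" using assms unfolding is_bracket_def by blast
  show ?thesis unfolding subspace_def centre_def
    using bilinear_ladd[OF b] bilinear_lmul[OF b] bilinear_lzero[OF b] by simp
qed

lemma P0_props:
  fixes W :: "'a::euclidean_space set"
  assumes W: "subspace W"
  shows "orth_proj W v \<in> W" "v - orth_proj W v \<in> orthogonal_comp W"
proof -
  obtain y z where y: "y \<in> span W" and z: "\<And>w. w \<in> span W \<Longrightarrow> orthogonal z w" and v: "v = y + z"
    using orthogonal_subspace_decomp_exists[of W v] by metis
  have sW: "span W = W" using W by simp
  have yW: "y \<in> W" using y sW by simp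
  have "v - y \<in> orthogonal_comp W" using z v sW
    by (auto simp: orthogonal_comp_def orthogonal_commute)
  hence "orth_proj W v = y" using orth_proj_eq[OF W yW] by blast
  thus "orth_proj W v \<in> W" "v - orth_proj W v \<in> orthogonal_comp W"
    using yW \<open>v - y \<in> _\<close> by auto
qed

lemma P1_eq:
  fixes W :: "'a::euclidean_space set"
  assumes W: "subspace W"
  shows "orth_proj (orthogonal_comp W) v = v - orth_proj W v"
proof -
  have a: "v - orth_proj W v \<in> orthogonal_comp W" using P0_props(2)[OF W] .
  have b: "orth_proj W v \<in> orthogonal_comp (orthogonal_comp W)"
    by (rule subsetD[OF orthogonal_comp_subset P0_props(1)[OF W]])
  have c: "v - (v - orth_proj W v) = orth_proj W v" by simp
  have b': "v - (v - orth_proj W v) \<in> orthogonal_comp (orthogonal_comp W)"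
    unfolding c by (rule b)
  show ?thesis using orth_proj_eq[of "orthogonal_comp W" "v - orth_proj W v" v] subspace_orthogonal_comp[of W] a b' by blast
qed

lemma P0_linear:
  fixes W :: "'a::euclidean_space set"
  assumes W: "subspace W"
  shows "linear (orth_proj W)"
proof (rule linearI)
  fix x y
  let ?px = "orth_proj W x" and ?py = "orth_proj W y"
  have 1: "?px + ?py \<in> W" by (rule subspace_add[OF W P0_props(1)[OF W] P0_props(1)[OF W]])
  have 2: "(x - ?px) + (y - ?py) \<in> orthogonal_comp W"
    by (rule subspace_add[OF subspace_orthogonal_comp P0_props(2)[OF W] P0_props(2)[OF W]])
  have 3: "x + y - (?px + ?py) = (x - ?px) + (y - ?py)" by (rule add_diff_add)
  have 4: "x + y - (?px + ?py) \<in> orthogonal_comp W" unfolding 3 by (rule 2)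
  show "orth_proj W (x + y) = ?px + ?py" by (rule orth_proj_eq[OF W 1 4])
next
  fix c and x :: 'a
  let ?px = "orth_proj W x"
  have 1: "c *\<^sub>R ?px \<in> W" by (rule subspace_scale[OF W P0_props(1)[OF W]])
  have 2: "c *\<^sub>R (x - ?px) \<in> orthogonal_comp W"
    by (rule subspace_scale[OF subspace_orthogonal_comp P0_props(2)[OF W]])
  have 3: "c *\<^sub>R x - c *\<^sub>R ?px = c *\<^sub>R (x - ?px)" by (rule scale_right_diff_distrib[symmetric])
  have 4: "c *\<^sub>R x - c *\<^sub>R ?px \<in> orthogonal_comp W" unfolding 3 by (rule 2)
  show "orth_proj W (c *\<^sub>R x) = c *\<^sub>R ?px" by (rule orth_proj_eq[OF W 1 4])
qed

theorem proposition3p2: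
  fixes J :: "'a::euclidean_space \<Rightarrow> 'a"
    and \<mu> :: "'a \<Rightarrow> 'a \<Rightarrow> 'a"
    and D :: "'a \<Rightarrow> 'a"
  assumes J: "complex_structure J" and Jorth: "orthogonal_map J"
    and \<mu>C: "\<mu> \<in> bracket_C J" and nil: "nilpotent_bracket \<mu>"
    and D: "D \<in> gl_J J"
  defines "\<zz> \<equiv> centre \<mu>"
  defines "P0 \<equiv> orth_proj \<zz>"
  defines "P1 \<equiv> orth_proj (orthogonal_comp \<zz>)"
  defines "\<mu>0 \<equiv> (\<lambda>v w. P0 (\<mu> v w))"
  defines "\<mu>1 \<equiv> (\<lambda>v w. P1 (\<mu> v w))"
  defines "D00 \<equiv> P0 \<circ> D \<circ> P0"
  defines "D01 \<equiv> P0 \<circ> D \<circ> P1"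
  defines "D11 \<equiv> P1 \<circ> D \<circ> P1"
  shows "D \<in> Der J \<mu> \<longleftrightarrow>
           (D ` \<zz> \<subseteq> \<zz> \<and>
            (\<forall>v w. D00 (\<mu>0 v w) + D01 (\<mu>1 v w) - \<mu>0 (D11 v) w - \<mu>0 v (D11 w) = 0) \<and>
            D11 \<in> Der J \<mu>1)"
proof -
  have bil: "bilinear \<mu>" and skew: "\<And>x y. \<mu> x y = - \<mu> y x"
    and muJ: "\<And>x y. \<mu> (J x) y = J (\<mu> x y)"
    using \<mu>C unfolding bracket_C_def is_bracket_def by blast+
  have linJ: "linear J" and JJ: "\<And>x. J (J x) = - x" using J unfolding complex_structure_def by auto
  have innJ: "\<And>x y. inner (J x) (J y) = inner x y" using Jorth unfolding orthogonal_map_def by auto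
  have linD: "linear D" and DJ: "\<And>x. D (J x) = J (D x)" using D unfolding gl_J_def by auto
  have Wsub: "subspace \<zz>" unfolding \<zz>_def
    using centre_subspace \<mu>C unfolding bracket_C_def by blast
  have P0in: "\<And>v. P0 v \<in> \<zz>" and P0c: "\<And>v. v - P0 v \<in> orthogonal_comp \<zz>"
    unfolding P0_def using P0_props[OF Wsub] by auto
  have P1eq: "\<And>v. P1 v = v - P0 v" unfolding P1_def P0_def using P1_eq[OF Wsub] by auto
  have linP0: "linear P0" unfolding P0_def using P0_linear[OF Wsub] .
  have linP1: "linear P1"
  proof -
    have "linear (\<lambda>v. v - P0 v)" using linP0 by (intro linear_compose_sub linear_ident) 
    thus ?thesis using P1eq by (simp add: fun_eq_iff[symmetric] P1eq[abs_def])
  qed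
  have zc: "\<And>z x. z \<in> \<zz> \<Longrightarrow> \<mu> z x = 0" unfolding \<zz>_def centre_def by auto
  have inz: "\<And>z. (\<And>x. \<mu> z x = 0) \<Longrightarrow> z \<in> \<zz>" unfolding \<zz>_def centre_def by auto
  have P0eqI: "\<And>v a. a \<in> \<zz> \<Longrightarrow> v - a \<in> orthogonal_comp \<zz> \<Longrightarrow> P0 v = a"
    unfolding P0_def using orth_proj_eq[OF Wsub] by blast
  have P0z: "\<And>a. a \<in> \<zz> \<Longrightarrow> P0 a = a"
    using P0eqI by (simp add: subspace_0[OF subspace_orthogonal_comp])
  have P0P0: "\<And>v. P0 (P0 v) = P0 v" using P0z P0in by blast
  have P1P0: "\<And>v. P1 (P0 v) = 0" using P1eq P0P0 by simp
  have P0P1: "\<And>v. P0 (P1 v) = 0" using P1eq P0P0 linear_diff[OF linP0] by simp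
  have P1P1: "\<And>v. P1 (P1 v) = P1 v" using P1eq P0P1 by simp
  have dec: "\<And>v. v = P0 v + P1 v" using P1eq by simp
  have muL: "\<And>x y. \<mu> x y = \<mu> (P1 x) y"
  proof -
    fix x y
    have "\<mu> x y = \<mu> (P0 x) y + \<mu> (P1 x) y" using dec[of x] bilinear_ladd[OF bil] by metis
    thus "\<mu> x y = \<mu> (P1 x) y" using zc[OF P0in] by simp
  qed
  have muR: "\<And>x y. \<mu> x y = \<mu> x (P1 y)" using muL skew by metis
  have Jz: "\<And>x. x \<in> \<zz> \<Longrightarrow> J x \<in> \<zz>"
    using muJ zc inz linear_0[OF linJ] by metis
  have Jzc: "\<And>x. x \<in> orthogonal_comp \<zz> \<Longrightarrow> J x \<in> orthogonal_comp \<zz>"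
  proof -
    fix x assume x: "x \<in> orthogonal_comp \<zz>"
    show "J x \<in> orthogonal_comp \<zz>" unfolding orthogonal_comp_def orthogonal_def
    proof (intro CollectI ballI)
      fix y assume y: "y \<in> \<zz>"
      have "y = J (- J y)" using JJ linear_neg[OF linJ] by simp
      hence "inner y (J x) = inner (J (- J y)) (J x)" by simp
      also have "\<dots> = inner (- J y) x" by (rule innJ)
      also have "\<dots> = 0" using x Jz[OF y] subspace_neg[OF Wsub]
        unfolding orthogonal_comp_def orthogonal_def by auto
      finally show "inner y (J x) = 0" .
    qed
  qed
  have P0J: "\<And>v. P0 (J v) = J (P0 v)"
    using P0eqI Jz P0in Jzc P0c linear_diff[OF linJ] by metis
  have P1J: "\<And>v. P1 (J v) = J (P1 v)" using P1eq P0J linear_diff[OF linJ] by metis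
  have linD11: "linear D11" unfolding D11_def using linP1 linD by (intro linear_compose)
  have D11J: "\<And>x. D11 (J x) = J (D11 x)" unfolding D11_def using P1J DJ by simp
  have bil1: "\<And>a b c. \<mu> (a + b) c = \<mu> a c + \<mu> b c" "\<And>a b c. \<mu> c (a + b) = \<mu> c a + \<mu> c b"
    using bilinear_ladd[OF bil] bilinear_radd[OF bil] by auto
  have P0add: "\<And>a b. P0 (a + b) = P0 a + P0 b" using linear_add[OF linP0] .
  have P1add: "\<And>a b. P1 (a + b) = P1 a + P1 b" using linear_add[OF linP1] .
  have Dadd: "\<And>a b. D (a + b) = D a + D b" using linear_add[OF linD] .
  have key: "\<And>v. P1 (D (P1 v)) = P1 (D v)" if Dz: "D ` \<zz> \<subseteq> \<zz>"
  proof -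
    fix v
    have "D (P0 v) \<in> \<zz>" using Dz P0in by blast
    hence "P1 (D (P0 v)) = 0" using P0z P1eq by simp
    moreover have "P1 (D v) = P1 (D (P0 v + P1 v))" using dec[of v, symmetric] by simp
    ultimately have "P1 (D v) = P1 (D (P1 v))" by (simp add: Dadd P1add)
    thus "P1 (D (P1 v)) = P1 (D v)" by simp
  qed
  have keyL: "\<And>v w. \<mu> (D v) w = \<mu> (D11 v) w" if Dz: "D ` \<zz> \<subseteq> \<zz>"
    unfolding D11_def using key[OF Dz] muL by (metis comp_apply)
  have keyR: "\<And>v w. \<mu> v (D w) = \<mu> v (D11 w)" if Dz: "D ` \<zz> \<subseteq> \<zz>"
    unfolding D11_def using key[OF Dz] muR by (metis comp_apply)
  have P0D: "\<And>m. D00 (P0 m) + D01 (P1 m) = P0 (D m)"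
  proof -
    fix m
    have "D00 (P0 m) + D01 (P1 m) = P0 (D (P0 m)) + P0 (D (P1 m))"
      unfolding D00_def D01_def by (simp add: P0P0 P1P1)
    also have "\<dots> = P0 (D (P0 m + P1 m))" by (simp add: P0add Dadd)
    also have "\<dots> = P0 (D m)" using dec[of m, symmetric] by simp
    finally show "D00 (P0 m) + D01 (P1 m) = P0 (D m)" .
  qed
  show ?thesis
  proof
    assume Der: "D \<in> Der J \<mu>"
    have der: "\<And>x y. D (\<mu> x y) = \<mu> (D x) y + \<mu> x (D y)" using Der unfolding Der_def by auto
    have Dz: "D ` \<zz> \<subseteq> \<zz>"
    proof
      fix y assume "y \<in> D ` \<zz>"
      then obtain z where z: "z \<in> \<zz>" "y = D z" by blast
      have "\<And>x. \<mu> (D z) x = 0"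
      proof -
        fix x
        have "D (\<mu> z x) = \<mu> (D z) x + \<mu> z (D x)" by (rule der)
        thus "\<mu> (D z) x = 0" using zc[OF z(1)] linear_0[OF linD] by simp
      qed
      thus "y \<in> \<zz>" using inz z by blast
    qed
    have eq: "\<forall>v w. D00 (\<mu>0 v w) + D01 (\<mu>1 v w) - \<mu>0 (D11 v) w - \<mu>0 v (D11 w) = 0"
    proof (intro allI)
      fix v w
      have "D00 (\<mu>0 v w) + D01 (\<mu>1 v w) = P0 (D (\<mu> v w))"
        unfolding \<mu>0_def \<mu>1_def by (rule P0D)
      also have "\<dots> = \<mu>0 (D11 v) w + \<mu>0 v (D11 w)"
        unfolding \<mu>0_def using der keyL[OF Dz] keyR[OF Dz] P0add by metis
      finally show "D00 (\<mu>0 v w) + D01 (\<mu>1 v w) - \<mu>0 (D11 v) w - \<mu>0 v (D11 w) = 0" by simp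
    qed
    have "D11 \<in> Der J \<mu>1" unfolding Der_def gl_J_def
    proof (intro CollectI conjI allI)
      fix x y
      have "D11 (\<mu>1 x y) = P1 (D (P1 (\<mu> x y)))" unfolding D11_def \<mu>1_def using P1P1 by simp
      also have "\<dots> = P1 (D (\<mu> x y))" using key[OF Dz] .
      also have "\<dots> = \<mu>1 (D11 x) y + \<mu>1 x (D11 y)"
        unfolding \<mu>1_def using der keyL[OF Dz] keyR[OF Dz] P1add by metis
      finally show "D11 (\<mu>1 x y) = \<mu>1 (D11 x) y + \<mu>1 x (D11 y)" .
    qed (use linD11 D11J in auto)
    thus "D ` \<zz> \<subseteq> \<zz> \<and> (\<forall>v w. D00 (\<mu>0 v w) + D01 (\<mu>1 v w) - \<mu>0 (D11 v) w - \<mu>0 v (D11 w) = 0) \<and> D11 \<in> Der J \<mu>1"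
      using Dz eq by blast
  next
    assume H: "D ` \<zz> \<subseteq> \<zz> \<and> (\<forall>v w. D00 (\<mu>0 v w) + D01 (\<mu>1 v w) - \<mu>0 (D11 v) w - \<mu>0 v (D11 w) = 0) \<and> D11 \<in> Der J \<mu>1"
    have Dz: "D ` \<zz> \<subseteq> \<zz>" using H by blast
    have eq: "\<And>v w. D00 (\<mu>0 v w) + D01 (\<mu>1 v w) = \<mu>0 (D11 v) w + \<mu>0 v (D11 w)"
      using H by (simp add: algebra_simps)
    have der1: "\<And>x y. D11 (\<mu>1 x y) = \<mu>1 (D11 x) y + \<mu>1 x (D11 y)"
      using H unfolding Der_def by auto
    have "\<And>x y. D (\<mu> x y) = \<mu> (D x) y + \<mu> x (D y)"
    proof -
      fix x y
      let ?m = "\<mu> x y"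
      have a: "P0 (D ?m) = P0 (\<mu> (D11 x) y) + P0 (\<mu> x (D11 y))"
        using eq[of x y] P0D[of ?m] unfolding \<mu>0_def \<mu>1_def by simp
      have b: "P1 (D ?m) = P1 (\<mu> (D11 x) y) + P1 (\<mu> x (D11 y))"
        using der1[of x y] key[OF Dz, of ?m] P1P1 unfolding \<mu>1_def D11_def by simp
      have "D ?m = P0 (D ?m) + P1 (D ?m)" by (rule dec)
      also have "\<dots> = (P0 (\<mu> (D11 x) y) + P1 (\<mu> (D11 x) y)) + (P0 (\<mu> x (D11 y)) + P1 (\<mu> x (D11 y)))"
        unfolding a b by (simp add: algebra_simps)
      also have "\<dots> = \<mu> (D11 x) y + \<mu> x (D11 y)"
        using dec[of "\<mu> (D11 x) y", symmetric] dec[of "\<mu> x (D11 y)", symmetric] by simp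
      also have "\<dots> = \<mu> (D x) y + \<mu> x (D y)" using keyL[OF Dz] keyR[OF Dz] by simp
      finally show "D (\<mu> x y) = \<mu> (D x) y + \<mu> x (D y)" .
    qed
    thus "D \<in> Der J \<mu>" unfolding Der_def using D by blast
  qed
qed

end
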